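(* Let $\psi\in C^1((0,\infty))$ be concave with $\psi'(1)=1$ and $H_\psi<\infty$, let $d>0$, and let $G=(V,E)$ be a finite connected graph satisfying $CD\psi(d,0)$. Then for every positive solution $u$ to the heat equation on $G$, all $x_1,x_2\in V$ and all $0<T_1<T_2$, \[ \log\frac{u(x_1,T_1)}{u(x_2,T_2)}\le\frac d2\log\frac{T_2}{T_1}+\frac{H_\psi\,\mathrm{dist}(x_1,x_2)^2}{T_2-T_1}. \]
   Context: A finite graph $G=(V,E)$: finite set $V$, irreflexive symmetric relation $E$; $v\sim w$ iff $(v,w)\in E$; $\mathrm{dist}$ is the combinatorial path distance; connected means all distances are finite. $C^+(V)$: positive functions. Laplacian $\Delta f(v)=\sum_{w\sim v}(f(w)-f(v))$. For $f\in C^+(V)$: $(\Delta^\psi f)(v):=\Delta\big[\psi\big(\tfrac{f}{f(v)}\big)\big](v)$; $(\Omega^\psi f)(v):=\Delta\Big[\psi'\big(\tfrac{f}{f(v)}\big)\cdot\tfrac{f}{f(v)}\cdot\big(\tfrac{\Delta f}{f}-\tfrac{(\Delta f)(v)}{f(v)}\big)\Big](v)$; $2\Gamma_2^\psi(f):=\Omega^\psi f+\frac{\Delta f\,\Delta^\psi f}{f}-\frac{\Delta(f\,\Delta^\psi f)}{f}$. $CD\psi(d,0)$: $\Gamma_2^\psi(f)\ge\frac1d(\Delta^\psi f)^2$ for all $f\in C^+(V)$. $\overline{\psi}(x):=\psi'(1)(x-1)-(\psi(x)-\psi(1))$, $H_\psi:=\sup_{x>1}\frac{(\log x)^2}{\overline{\psi}(x)}$.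 A solution to the heat equation is $u:V\times[0,\infty)\to\mathbb{R}$, continuously differentiable in $t$, with $\Delta u=\partial_tu$. *)

theory Defs
  imports "HOL-Analysis.Analysis"
begin

definition finite_graph :: "'a set \<Rightarrow> ('a \<Rightarrow> 'a \<Rightarrow> bool) \<Rightarrow> bool" where
  "finite_graph V E \<longleftrightarrow> finite V \<and> (\<forall>v w. E v w \<longrightarrow> v \<in> V \<and> w \<in> V)
     \<and> (\<forall>v w. E v w \<longrightarrow> E w v) \<and> (\<forall>v. \<not> E v v)"

definition walk :: "('a \<Rightarrow> 'a \<Rightarrow> bool) \<Rightarrow> 'a \<Rightarrow> 'a \<Rightarrow> nat \<Rightarrow> bool" where
  "walk E x y n \<longleftrightarrow> (\<exists>p::nat \<Rightarrow> 'a. p 0 = x \<and> p n = y \<and> (\<forall>i<n. E (p i) (p (Suc i))))"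

definition graph_connected :: "'a set \<Rightarrow> ('a \<Rightarrow> 'a \<Rightarrow> bool) \<Rightarrow> bool" where
  "graph_connected V E \<longleftrightarrow> (\<forall>x\<in>V. \<forall>y\<in>V. \<exists>n. walk E x y n)"

text \<open>Combinatorial path distance (meaningful for connected graphs).\<close>
definition gdist :: "('a \<Rightarrow> 'a \<Rightarrow> bool) \<Rightarrow> 'a \<Rightarrow> 'a \<Rightarrow> nat" where
  "gdist E x y = (LEAST n. walk E x y n)"

definition lap :: "'a set \<Rightarrow> ('a \<Rightarrow> 'a \<Rightarrow> bool) \<Rightarrow> ('a \<Rightarrow> real) \<Rightarrow> 'a \<Rightarrow> real" where
  "lap V E f v = (\<Sum>w\<in>{w\<in>V. E v w}. f w - f v)"

definition psi_lap :: "'a set \<Rightarrow> ('a \<Rightarrow> 'a \<Rightarrow> bool) \<Rightarrow> (real \<Rightarrow> real) \<Rightarrow> ('a \<Rightarrow> real) \<Rightarrow> 'a \<Rightarrow> real" where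
  "psi_lap V E \<psi> f v = lap V E (\<lambda>w. \<psi> (f w / f v)) v"

definition psi_Omega :: "'a set \<Rightarrow> ('a \<Rightarrow> 'a \<Rightarrow> bool) \<Rightarrow> (real \<Rightarrow> real) \<Rightarrow> ('a \<Rightarrow> real) \<Rightarrow> 'a \<Rightarrow> real" where
  "psi_Omega V E \<psi> f v = lap V E (\<lambda>w. deriv \<psi> (f w / f v) * (f w / f v) *
        (lap V E f w / f w - lap V E f v / f v)) v"

definition psi_Gamma2 :: "'a set \<Rightarrow> ('a \<Rightarrow> 'a \<Rightarrow> bool) \<Rightarrow> (real \<Rightarrow> real) \<Rightarrow> ('a \<Rightarrow> real) \<Rightarrow> 'a \<Rightarrow> real" where
  "psi_Gamma2 V E \<psi> f v = (psi_Omega V E \<psi> f v + lap V E f v * psi_lap V E \<psi> f v / f v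
        - lap V E (\<lambda>w. f w * psi_lap V E \<psi> f w) v / f v) / 2"

text \<open>Curvature-dimension condition CD\<psi>(d,0).\<close>
definition CDpsi :: "'a set \<Rightarrow> ('a \<Rightarrow> 'a \<Rightarrow> bool) \<Rightarrow> (real \<Rightarrow> real) \<Rightarrow> real \<Rightarrow> bool" where
  "CDpsi V E \<psi> d \<longleftrightarrow> (\<forall>f. (\<forall>v\<in>V. f v > 0) \<longrightarrow>
      (\<forall>v\<in>V. psi_Gamma2 V E \<psi> f v \<ge> (1 / d) * (psi_lap V E \<psi> f v)\<^sup>2))"

definition psi_bar :: "(real \<Rightarrow> real) \<Rightarrow> real \<Rightarrow> real" where
  "psi_bar \<psi> x = deriv \<psi> 1 * (x - 1) - (\<psi> x - \<psi> 1)"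

text \<open>H_\<psi> < \<infinity>: the ratio (log x)^2 / psi_bar x is finite (psi_bar x > 0) for all x > 1
  and bounded above; in that case H_\<psi> is the (real) supremum.\<close>
definition H_psi_finite :: "(real \<Rightarrow> real) \<Rightarrow> bool" where
  "H_psi_finite \<psi> \<longleftrightarrow> (\<forall>x>1. psi_bar \<psi> x > 0) \<and>
      bdd_above ((\<lambda>x. (ln x)\<^sup>2 / psi_bar \<psi> x) ` {1<..})"

definition H_psi :: "(real \<Rightarrow> real) \<Rightarrow> real" where
  "H_psi \<psi> = (SUP x\<in>{1<..}. (ln x)\<^sup>2 / psi_bar \<psi> x)"

text \<open>Solution of the heat equation on V \<times> [0,\<infinity>), C^1 in t (one-sided at t = 0).\<close>
definition heat_solution :: "'a set \<Rightarrow> ('a \<Rightarrow> 'a \<Rightarrow> bool) \<Rightarrow> ('a \<Rightarrow> real \<Rightarrow> real) \<Rightarrow> bool" where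
  "heat_solution V E u \<longleftrightarrow>
     (\<forall>x\<in>V. \<forall>t\<ge>0. ((\<lambda>s. u x s) has_real_derivative lap V E (\<lambda>y. u y t) x) (at t within {0..}))
   \<and> (\<forall>x\<in>V. continuous_on {0..} (\<lambda>t. lap V E (\<lambda>y. u y t) x))"

end

theory Submission
  imports Defs
begin

locale heatset =
  fixes psi :: "real \<Rightarrow> real" and d :: real
    and V :: "'a set" and E :: "'a \<Rightarrow> 'a \<Rightarrow> bool" and u :: "'a \<Rightarrow> real \<Rightarrow> real"
  assumes psi_diff: "\<forall>x>0. psi differentiable (at x)"
    and psi_concave: "concave_on {0<..} psi"
    and psi_norm: "deriv psi 1 = 1"
    and H_fin: "H_psi_finite psi"
    and d_pos: "d > 0"
    and graph: "finite_graph V E"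
    and CD: "CDpsi V E psi d"
    and heat: "heat_solution V E u"
    and u_pos: "\<forall>x\<in>V. \<forall>t\<ge>0. u x t > 0"
begin

definition N where "N v = {w\<in>V. E v w}"

lemma finV: "finite V" using graph by (simp add: finite_graph_def)

lemma finN: "finite (N v)" unfolding N_def using finV by simp

lemma EV: "E v w \<Longrightarrow> v \<in> V \<and> w \<in> V" using graph by (simp add: finite_graph_def)

lemma Esym: "E v w \<Longrightarrow> E w v" using graph by (simp add: finite_graph_def)

lemma lap_eq: "lap V E f v = (\<Sum>w\<in>N v. f w - f v)" unfolding lap_def N_def by simp

lemma psi_deriv: "x > 0 \<Longrightarrow> (psi has_real_derivative deriv psi x) (at x)"
  using psi_diff DERIV_deriv_iff_real_differentiable by blast

lemma psibar_nonneg: assumes "x > 0" shows "psi_bar psi x \<ge> 0"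
proof -
  have cv: "convex_on {0<..} (\<lambda>x. - psi x)"
    using convex_on_iff_concave[of "{0<..}" "\<lambda>x. - psi x"] psi_concave by simp
  have der: "((\<lambda>x. - psi x) has_field_derivative - deriv psi 1) (at 1 within {0<..})"
    by (rule has_field_derivative_at_within, rule DERIV_minus, rule psi_deriv) simp
  have "(- psi x) - (- psi 1) \<ge> (- deriv psi 1) * (x - 1)"
    by (rule convex_on_imp_above_tangent[OF cv _ _ _ der]) (use assms in \<open>auto simp: interior_open\<close>)
  then show ?thesis unfolding psi_bar_def using psi_norm by simp
qed

lemma H_bound: assumes "x > 1" shows "(ln x)^2 \<le> H_psi psi * psi_bar psi x"
proof -
  have pb: "psi_bar psi x > 0" using H_fin assms unfolding H_psi_finite_def by auto
  have "(ln x)^2 / psi_bar psi x \<le> H_psi psi"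
    unfolding H_psi_def using H_fin assms unfolding H_psi_finite_def
    by (intro cSUP_upper) simp_all
  then show ?thesis using pb by (simp add: divide_le_eq mult.commute)
qed

lemma H_pos: "H_psi psi > 0"
proof -
  have "(ln 2)^2 \<le> H_psi psi * psi_bar psi 2" using H_bound[of 2] by simp
  moreover have "(ln (2::real))^2 > 0" by simp
  moreover have "psi_bar psi 2 > 0" using H_fin unfolding H_psi_finite_def by auto
  ultimately have "0 < H_psi psi * psi_bar psi 2" by linarith
  with \<open>psi_bar psi 2 > 0\<close> show ?thesis by (simp add: zero_less_mult_iff)
qed

lemma u_deriv_within: "x \<in> V \<Longrightarrow> t \<ge> 0 \<Longrightarrow>
   ((\<lambda>s. u x s) has_real_derivative lap V E (\<lambda>y. u y t) x) (at t within {0..})"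
  using heat unfolding heat_solution_def by blast

lemma u_deriv: "x \<in> V \<Longrightarrow> t > 0 \<Longrightarrow>
   ((\<lambda>s. u x s) has_real_derivative lap V E (\<lambda>y. u y t) x) (at t)"
  using u_deriv_within[of x t] at_within_interior[of t "{0..}"] by simp

definition Phi where "Phi v t = psi_lap V E psi (\<lambda>y. u y t) v"

lemma Phi_deriv_within:
  assumes v: "v \<in> V" and t: "t \<ge> 0"
  shows "((\<lambda>s. Phi v s) has_real_derivative psi_Omega V E psi (\<lambda>y. u y t) v) (at t within {0..})"
proof -
  define l where "l w = lap V E (\<lambda>y. u y t) w" for w
  have uv: "u v t > 0" using u_pos v t by auto
  define D where "D w = deriv psi (u w t / u v t) * ((l w * u v t - u w t * l v) / (u v t * u v t))" for w
  have comp: "((\<lambda>s. psi (u w s / u v s)) has_real_derivative D w) (at t within {0..})"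
    if w: "w \<in> V" for w
  proof -
    have uw: "u w t > 0" using u_pos w t by auto
    have r: "((\<lambda>s. u w s / u v s) has_real_derivative (l w * u v t - u w t * l v) / (u v t * u v t)) (at t within {0..})"
      unfolding l_def using u_deriv_within[OF w t] u_deriv_within[OF v t] uv
      by (intro DERIV_divide) auto
    show ?thesis unfolding D_def
      by (rule DERIV_chain2[OF psi_deriv r]) (use uw uv in simp)
  qed
  have sd: "((\<lambda>s. \<Sum>w\<in>N v. psi (u w s / u v s) - psi (u v s / u v s)) has_real_derivative
      (\<Sum>w\<in>N v. D w - D v)) (at t within {0..})"
    by (intro DERIV_sum DERIV_diff comp v) (auto simp: N_def)
  have Dv: "D v = 0" unfolding D_def by simp
  have Dw: "D w = deriv psi (u w t / u v t) * (u w t / u v t) * (l w / u w t - l v / u v t)"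
    if w: "w \<in> V" for w
  proof -
    have uw: "u w t > 0" using u_pos w t by auto
    show ?thesis unfolding D_def using uw uv by (simp add: field_simps)
  qed
  have eq: "(\<Sum>w\<in>N v. D w - D v) = psi_Omega V E psi (\<lambda>y. u y t) v"
    unfolding psi_Omega_def l_def[symmetric] unfolding lap_eq using Dv Dw
    by (intro sum.cong) (auto simp: N_def)
  have fe: "Phi v s = (\<Sum>w\<in>N v. psi (u w s / u v s) - psi (u v s / u v s))" for s
    unfolding Phi_def psi_lap_def lap_eq by simp
  show ?thesis using sd eq unfolding fe by simp
qed

lemma Phi_deriv:
  assumes "v \<in> V" "t > 0"
  shows "((\<lambda>s. Phi v s) has_real_derivative psi_Omega V E psi (\<lambda>y. u y t) v) (at t)"
  using Phi_deriv_within[of v t] assms at_within_interior[of t "{0..}"] by simp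

lemma CD_at:
  assumes v: "v \<in> V" and t: "t \<ge> 0"
  shows "psi_Omega V E psi (\<lambda>y. u y t) v \<ge> 2 / d * (Phi v t)^2
     + (\<Sum>w\<in>N v. u w t * (Phi w t - Phi v t)) / u v t"
proof -
  define f where "f = (\<lambda>y. u y t)"
  have fpos: "\<forall>w\<in>V. f w > 0" using u_pos t unfolding f_def by auto
  let ?P = "psi_lap V E psi f v" and ?S = "\<Sum>w\<in>N v. f w * (psi_lap V E psi f w - psi_lap V E psi f v)"
  have g: "psi_Gamma2 V E psi f v \<ge> (1 / d) * ?P\<^sup>2"
    using CD fpos v unfolding CDpsi_def by blast
  have diff: "lap V E (\<lambda>w. f w * psi_lap V E psi f w) v - lap V E f v * ?P = ?S"
    unfolding lap_eq sum_distrib_right sum_subtractf[symmetric]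
    by (intro sum.cong) (auto simp: algebra_simps)
  have e1: "lap V E f v * ?P / f v - lap V E (\<lambda>w. f w * psi_lap V E psi f w) v / f v
     = (lap V E f v * ?P - lap V E (\<lambda>w. f w * psi_lap V E psi f w) v) / f v"
    by (simp add: diff_divide_distrib)
  have e2: "(lap V E f v * ?P - lap V E (\<lambda>w. f w * psi_lap V E psi f w) v) / f v = - ?S / f v"
    using diff by (metis minus_diff_eq)
  have e3: "2 / d * ?P\<^sup>2 = 2 * ((1 / d) * ?P\<^sup>2)" by simp
  have "psi_Omega V E psi f v \<ge> 2 / d * ?P^2 + ?S / f v"
    using g e1 e2 e3 unfolding psi_Gamma2_def by (simp add: field_simps)
  then show ?thesis unfolding Phi_def f_def .
qed

lemma F_cont: assumes v: "v \<in> V" shows "continuous_on {0..T} (\<lambda>s. s * Phi v s)"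
proof -
  have "continuous (at s within {0..T}) (\<lambda>s. s * Phi v s)" if s: "s \<in> {0..T}" for s
  proof -
    have "continuous (at s within {0..}) (\<lambda>s. Phi v s)"
      using Phi_deriv_within[OF v, of s] s by (intro DERIV_continuous) auto
    then have "continuous (at s within {0..T}) (\<lambda>s. Phi v s)"
      by (rule continuous_within_subset) auto
    then show ?thesis by (intro continuous_intros)
  qed
  then show ?thesis using continuous_on_eq_continuous_within by blast
qed

lemma LiYau:
  assumes v: "v \<in> V" and t: "t > 0"
  shows "- d / 2 \<le> t * Phi v t"
proof (rule ccontr)
  assume neg: "\<not> ?thesis"
  define F where "F w s = s * Phi w s" for w s
  have "\<forall>w\<in>V. \<exists>\<tau>\<in>{0..t}. \<forall>s\<in>{0..t}. F w \<tau> \<le> F w s"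
  proof
    fix w assume w: "w \<in> V"
    show "\<exists>\<tau>\<in>{0..t}. \<forall>s\<in>{0..t}. F w \<tau> \<le> F w s"
      unfolding F_def using t
      by (intro continuous_attains_inf F_cont w) auto
  qed
  then obtain \<tau> where tau: "\<And>w. w \<in> V \<Longrightarrow> \<tau> w \<in> {0..t} \<and> (\<forall>s\<in>{0..t}. F w (\<tau> w) \<le> F w s)"
    by metis
  define m where "m = Min ((\<lambda>w. F w (\<tau> w)) ` V)"
  have Vne: "V \<noteq> {}" using v by auto
  have "m \<in> (\<lambda>w. F w (\<tau> w)) ` V" unfolding m_def using finV Vne by (intro Min_in) auto
  then obtain v0 where v0: "v0 \<in> V" "m = F v0 (\<tau> v0)" by auto
  have mle: "m \<le> F w (\<tau> w)" if "w \<in> V" for w unfolding m_def using finV that by (intro Min_le) auto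
  define T0 where "T0 = \<tau> v0"
  have T0: "T0 \<in> {0..t}" using tau[OF v0(1)] unfolding T0_def by auto
  have glob: "F v0 T0 \<le> F w s" if "w \<in> V" "s \<in> {0..t}" for w s
    using mle[OF that(1)] tau[OF that(1)] that(2) v0 unfolding T0_def by force
  have lt: "F v0 T0 < - d / 2" using glob[OF v, of t] neg t unfolding F_def by auto
  have "T0 \<noteq> 0" using lt d_pos unfolding F_def by auto
  then have T0pos: "T0 > 0" using T0 by auto
  define P0 where "P0 = Phi v0 T0"
  have P0neg: "P0 < 0"
  proof -
    have "T0 * P0 < 0" using lt d_pos unfolding F_def P0_def by auto
    then show ?thesis using T0pos by (simp add: mult_less_0_iff)
  qed
  have Sge: "(\<Sum>w\<in>N v0. u w T0 * (Phi w T0 - Phi v0 T0)) \<ge> 0"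
  proof (intro sum_nonneg)
    fix w assume w: "w \<in> N v0"
    then have wV: "w \<in> V" by (simp add: N_def)
    have "T0 * Phi v0 T0 \<le> T0 * Phi w T0" using glob[OF wV, of T0] T0 unfolding F_def by auto
    then have "Phi v0 T0 \<le> Phi w T0" using T0pos by simp
    moreover have "u w T0 > 0" using u_pos wV T0pos by auto
    ultimately show "u w T0 * (Phi w T0 - Phi v0 T0) \<ge> 0" by simp
  qed
  define Om where "Om = psi_Omega V E psi (\<lambda>y. u y T0) v0"
  have uv0: "u v0 T0 > 0" using u_pos v0 T0pos by auto
  have Om: "Om \<ge> 2 / d * P0^2"
  proof -
    have "Om \<ge> 2 / d * P0^2 + (\<Sum>w\<in>N v0. u w T0 * (Phi w T0 - Phi v0 T0)) / u v0 T0"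
      using CD_at[OF v0(1), of T0] T0pos unfolding Om_def P0_def by simp
    moreover have "(\<Sum>w\<in>N v0. u w T0 * (Phi w T0 - Phi v0 T0)) / u v0 T0 \<ge> 0"
      using Sge uv0 by simp
    ultimately show ?thesis by linarith
  qed
  have der: "((\<lambda>s. s * Phi v0 s) has_real_derivative 1 * P0 + Om * T0) (at T0)"
    unfolding P0_def Om_def using Phi_deriv[OF v0(1) T0pos]
    by (intro DERIV_mult DERIV_ident)
  have "T0 * Om \<ge> T0 * (2 / d * P0^2)" using Om T0pos by (intro mult_left_mono) auto
  moreover have "P0 + T0 * (2 / d * P0^2) = P0 * (1 + 2 * (T0 * P0) / d)"
    using d_pos by (simp add: field_simps power2_eq_square)
  moreover have "1 + 2 * (T0 * P0) / d < 0"
  proof -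
    have "T0 * P0 < - d / 2" using lt unfolding F_def P0_def .
    then have "2 * (T0 * P0) < - d" by linarith
    then have "2 * (T0 * P0) / d < -1" using d_pos by (simp add: divide_less_eq)
    then show ?thesis by linarith
  qed
  ultimately have Dpos: "1 * P0 + Om * T0 > 0"
  proof -
    assume a: "T0 * Om \<ge> T0 * (2 / d * P0^2)" "P0 + T0 * (2 / d * P0^2) = P0 * (1 + 2 * (T0 * P0) / d)"
      "1 + 2 * (T0 * P0) / d < 0"
    have "0 < P0 * (1 + 2 * (T0 * P0) / d)" using mult_neg_neg[OF P0neg a(3)] .
    then show ?thesis using a(1,2) by (simp add: mult.commute)
  qed
  obtain \<delta> where dl: "\<delta> > 0" "\<forall>h>0. h < \<delta> \<longrightarrow> (T0 - h) * Phi v0 (T0 - h) < T0 * Phi v0 T0"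
    using DERIV_pos_inc_left[OF der Dpos] by blast
  define h where "h = min (\<delta>/2) (T0/2)"
  have h: "h > 0" "h < \<delta>" "T0 - h \<in> {0..t}" using dl T0pos T0 unfolding h_def by auto
  have "F v0 (T0 - h) < F v0 T0" using dl h unfolding F_def by auto
  moreover have "F v0 T0 \<le> F v0 (T0 - h)" using glob[OF v0(1) h(3)] .
  ultimately show False by linarith
qed

lemma lapu_eq:
  assumes v: "v \<in> V" and t: "t \<ge> 0"
  shows "lap V E (\<lambda>y. u y t) v / u v t = Phi v t + (\<Sum>w\<in>N v. psi_bar psi (u w t / u v t))"
proof -
  have uv: "u v t > 0" using u_pos v t by auto
  have "Phi v t + (\<Sum>w\<in>N v. psi_bar psi (u w t / u v t)) = (\<Sum>w\<in>N v. u w t / u v t - 1)"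
    unfolding Phi_def psi_lap_def lap_eq sum.distrib[symmetric] using uv
    by (intro sum.cong) (auto simp: psi_bar_def psi_norm)
  also have "\<dots> = (\<Sum>w\<in>N v. (u w t - u v t) / u v t)"
    using uv by (intro sum.cong) (auto simp: field_simps)
  also have "\<dots> = lap V E (\<lambda>y. u y t) v / u v t"
    unfolding lap_eq sum_divide_distrib by simp
  finally show ?thesis by simp
qed

lemma lapu_ge:
  assumes v: "v \<in> V" and t: "t \<ge> 0" and w: "w \<in> N v"
  shows "lap V E (\<lambda>y. u y t) v / u v t \<ge> Phi v t + psi_bar psi (u w t / u v t)"
proof -
  have nn: "psi_bar psi (u z t / u v t) \<ge> 0" if "z \<in> N v" for z
  proof -
    have "z \<in> V" using that by (simp add: N_def)
    then have "u z t / u v t > 0" using u_pos v t by auto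
    then show ?thesis by (rule psibar_nonneg)
  qed
  have "psi_bar psi (u w t / u v t) \<le> (\<Sum>z\<in>N v. psi_bar psi (u z t / u v t))"
    using w nn finN by (intro member_le_sum) auto
  then show ?thesis using lapu_eq[OF v t] by simp
qed

definition P where "P x t = ln (u x t) + d / 2 * ln t"

lemma P_deriv:
  assumes x: "x \<in> V" and t: "t > 0"
  shows "((\<lambda>s. P x s) has_real_derivative lap V E (\<lambda>y. u y t) x / u x t + d / 2 * (1 / t)) (at t)"
proof -
  have ux: "u x t > 0" using u_pos x t by auto
  have a: "((\<lambda>s. ln (u x s)) has_real_derivative 1 / u x t * lap V E (\<lambda>y. u y t) x) (at t)"
    by (rule DERIV_chain2[OF DERIV_ln_divide[OF ux] u_deriv[OF x t]])
  have b: "((\<lambda>s. d / 2 * ln s) has_real_derivative d / 2 * (1 / t)) (at t)"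
    by (intro DERIV_cmult DERIV_ln_divide t)
  show ?thesis unfolding P_def using DERIV_add[OF a b] by simp
qed

lemma P_deriv_ge:
  assumes x: "x \<in> V" and t: "t > 0"
  shows "lap V E (\<lambda>y. u y t) x / u x t + d / 2 * (1 / t) \<ge> 0"
    and "w \<in> N x \<Longrightarrow> lap V E (\<lambda>y. u y t) x / u x t + d / 2 * (1 / t) \<ge> psi_bar psi (u w t / u x t)"
proof -
  have ly: "Phi x t + d / 2 * (1 / t) \<ge> 0"
  proof -
    have "- d / 2 \<le> t * Phi x t" by (rule LiYau[OF x t])
    then have "(t * Phi x t + d / 2) / t \<ge> 0" using t by simp
    moreover have "Phi x t + d / 2 * (1 / t) = (t * Phi x t + d / 2) / t" using t by (simp add: field_simps)
    ultimately show ?thesis by simp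
  qed
  show "lap V E (\<lambda>y. u y t) x / u x t + d / 2 * (1 / t) \<ge> 0"
  proof -
    have "(\<Sum>w\<in>N x. psi_bar psi (u w t / u x t)) \<ge> 0"
    proof (intro sum_nonneg psibar_nonneg)
      fix w assume "w \<in> N x"
      then have "w \<in> V" by (simp add: N_def)
      then show "u w t / u x t > 0" using u_pos x t by auto
    qed
    then show ?thesis using lapu_eq[OF x, of t] t ly by simp
  qed
  show "w \<in> N x \<Longrightarrow> lap V E (\<lambda>y. u y t) x / u x t + d / 2 * (1 / t) \<ge> psi_bar psi (u w t / u x t)"
    using lapu_ge[OF x, of t w] t ly by simp
qed

lemma P_mono:
  assumes x: "x \<in> V" and s: "0 < s" "s \<le> s'"
  shows "P x s \<le> P x s'"
  using s by (intro deriv_nonneg_imp_mono[where g="P x" and g'="\<lambda>t. lap V E (\<lambda>y. u y t) x / u x t + d / 2 * (1 / t)"]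
      P_deriv[OF x] P_deriv_ge(1)[OF x]) auto

lemma edge:
  assumes x: "x \<in> V" and y: "y \<in> V" and exy: "E x y" and s: "0 < s" "s < s'"
  shows "ln (u x s) - ln (u y s') \<le> d / 2 * (ln s' - ln s) + H_psi psi / (s' - s)"
proof (rule ccontr)
  define H where "H = H_psi psi"
  have Hp: "H > 0" using H_pos unfolding H_def .
  define c where "c = H / (s' - s)"
  have cp: "c > 0" using Hp s unfolding c_def by simp
  assume "\<not> ?thesis"
  then have A: "ln (u x s) - ln (u y s') > d / 2 * (ln s' - ln s) + c" unfolding c_def H_def by simp
  define G where "G t = c + P y s' - P y t" for t
  define DP where "DP t = lap V E (\<lambda>z. u z t) y / u y t + d / 2 * (1 / t)" for t
  have xN: "x \<in> N y" using Esym[OF exy] x by (simp add: N_def)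
  have L: "ln (u x t) - ln (u y t) > G t" if t: "t \<in> {s..s'}" for t
  proof -
    have "P x s \<le> P x t" using P_mono[OF x, of s t] t s by auto
    moreover have "d / 2 * (ln s' - ln s) = d / 2 * ln s' - d / 2 * ln s" by (simp add: right_diff_distrib)
    ultimately show ?thesis using A unfolding G_def P_def by linarith
  qed
  have Gc: "G t \<ge> c" if t: "t \<in> {s..s'}" for t
    using P_mono[OF y, of t s'] t s unfolding G_def by auto
  define K where "K t = inverse (G t) - t / H" for t
  have Kd: "(K has_real_derivative - (- DP t * inverse (G t ^ Suc (Suc 0))) - 1 / H) (at t)"
    if t: "t \<in> {s..s'}" for t
  proof -
    have tp: "t > 0" using t s by auto
    have "(G has_real_derivative 0 + 0 - DP t) (at t)"
      unfolding G_def[abs_def] DP_def by (intro DERIV_diff DERIV_add DERIV_const P_deriv[OF y tp])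
    then have g: "(G has_real_derivative - DP t) (at t)" by simp
    have "G t \<noteq> 0" using Gc[OF t] cp by auto
    have "((\<lambda>t. t / H) has_real_derivative 1 / H) (at t)"
      by (rule DERIV_cdivide[OF DERIV_ident])
    then show ?thesis unfolding K_def[abs_def]
      by (intro DERIV_diff DERIV_inverse_fun g) (use \<open>G t \<noteq> 0\<close> in auto)
  qed
  have Kd_nn: "- (- DP t * inverse (G t ^ Suc (Suc 0))) - 1 / H \<ge> 0" if t: "t \<in> {s..s'}" for t
  proof -
    have tp: "t > 0" using t s by auto
    have ux: "u x t > 0" and uy: "u y t > 0" using u_pos x y tp by auto
    define r where "r = u x t / u y t"
    have lnr: "ln r = ln (u x t) - ln (u y t)" unfolding r_def using ux uy by (simp add: ln_div)
    have Gp: "G t > 0" using Gc[OF t] cp by auto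
    have Lr: "ln r > G t" using L[OF t] lnr by simp
    have r1: "r > 1"
    proof -
      have "ln r > 0" using Lr Gp by linarith
      moreover have "r > 0" unfolding r_def using ux uy by simp
      ultimately show ?thesis using ln_gt_zero_iff by blast
    qed
    have "DP t \<ge> psi_bar psi r" unfolding DP_def r_def using P_deriv_ge(2)[OF y tp xN] .
    then have "H * DP t \<ge> H * psi_bar psi r" using Hp by simp
    moreover have "H * psi_bar psi r \<ge> (ln r)^2" using H_bound[OF r1] unfolding H_def by simp
    moreover have "(ln r)^2 \<ge> (G t)^2" using Lr Gp by (intro power_mono) auto
    ultimately have "(G t)^2 \<le> H * DP t" by linarith
    then have "1 / H \<le> DP t / (G t)^2" using Hp Gp by (simp add: field_simps)
    then show ?thesis by (simp add: field_simps power2_eq_square)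
  qed
  have "K s \<le> K s'"
    using s by (intro deriv_nonneg_imp_mono[where g=K and g'="\<lambda>t. - (- DP t * inverse (G t ^ Suc (Suc 0))) - 1 / H"]
      Kd Kd_nn) auto
  moreover have "G s' = c" unfolding G_def by simp
  moreover have "inverse c = (s' - s) / H" unfolding c_def by simp
  moreover have "inverse (G s) > 0" using Gc[of s] s cp by auto
  ultimately have "inverse (G s) - s / H \<le> (s' - s) / H - s' / H" unfolding K_def by simp
  moreover have "(s' - s) / H - s' / H = - s / H" by (simp add: diff_divide_distrib)
  ultimately show False using \<open>inverse (G s) > 0\<close> by linarith
qed

lemma walk_Suc: "walk E x y (Suc n) \<Longrightarrow> \<exists>z. walk E x z n \<and> E z y"
  unfolding walk_def by (metis less_Suc_eq)

lemma path:
  assumes "walk E x y n" "x \<in> V" "0 < s" "s < s'"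
  shows "ln (u x s) - ln (u y s') \<le> d / 2 * (ln s' - ln s) + H_psi psi * (real n)^2 / (s' - s)"
  using assms
proof (induction n arbitrary: y s')
  case 0
  then have "x = y" unfolding walk_def by auto
  then show ?case using P_mono[OF \<open>x \<in> V\<close>, of s s'] 0 unfolding P_def by (simp add: algebra_simps)
next
  case (Suc n)
  obtain z where z: "walk E x z n" "E z y" using walk_Suc[OF Suc.prems(1)] by blast
  have zV: "z \<in> V" and yV: "y \<in> V" using EV[OF z(2)] by auto
  show ?case
  proof (cases "n = 0")
    case True
    then have "x = z" using z(1) unfolding walk_def by auto
    then show ?thesis using edge[OF Suc.prems(2) yV _ Suc.prems(3,4)] z(2) True by simp
  next
    case False
    define H where "H = H_psi psi"
    define r where "r = s + (s' - s) * real n / (real n + 1)"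
    have n1: "real n \<ge> 1" using False by simp
    have rs: "r - s = (s' - s) * real n / (real n + 1)" unfolding r_def by simp
    have sr: "s' - r = (s' - s) / (real n + 1)" unfolding r_def by (simp add: field_simps)
    have "(s' - s) * real n / (real n + 1) > 0" using Suc.prems n1 by simp
    then have r1: "s < r" using rs by simp
    have "(s' - s) / (real n + 1) > 0" using Suc.prems n1 by simp
    then have r2: "r < s'" using sr by simp
    have ih: "ln (u x s) - ln (u z r) \<le> d / 2 * (ln r - ln s) + H * (real n)^2 / (r - s)"
      using Suc.IH[OF z(1) Suc.prems(2,3) r1] unfolding H_def .
    have ed: "ln (u z r) - ln (u y s') \<le> d / 2 * (ln s' - ln r) + H / (s' - r)"
      using edge[OF zV yV z(2) _ r2] r1 Suc.prems unfolding H_def by simp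
    have e1: "H * (real n)^2 / (r - s) = H * real n * (real n + 1) / (s' - s)"
      unfolding rs using n1 Suc.prems by (simp add: field_simps power2_eq_square)
    have e2: "H / (s' - r) = H * (real n + 1) / (s' - s)"
      unfolding sr using n1 Suc.prems by (simp add: field_simps)
    have "H * real n * (real n + 1) / (s' - s) + H * (real n + 1) / (s' - s)
       = (H * real n * (real n + 1) + H * (real n + 1)) / (s' - s)" by (simp add: add_divide_distrib)
    also have "H * real n * (real n + 1) + H * (real n + 1) = H * (real (Suc n))^2"
      by (simp add: algebra_simps power2_eq_square)
    finally have e3: "H * real n * (real n + 1) / (s' - s) + H * (real n + 1) / (s' - s)
       = H * (real (Suc n))^2 / (s' - s)" .
    have e4: "d / 2 * (ln r - ln s) + d / 2 * (ln s' - ln r) = d / 2 * (ln s' - ln s)"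
      by (simp only: distrib_left[symmetric]) simp
    show ?thesis using ih ed e1 e2 e3 e4 unfolding H_def by linarith
  qed
qed

end

theorem mainTheorem11:
  fixes \<psi> :: "real \<Rightarrow> real" and d :: real
    and V :: "'a set" and E :: "'a \<Rightarrow> 'a \<Rightarrow> bool" and u :: "'a \<Rightarrow> real \<Rightarrow> real"
    and x1 x2 :: 'a and T1 T2 :: real
  assumes psi_diff: "\<forall>x>0. \<psi> differentiable (at x)"
    and psi_C1: "continuous_on {0<..} (deriv \<psi>)"
    and psi_concave: "concave_on {0<..} \<psi>"
    and psi_norm: "deriv \<psi> 1 = 1"
    and H_fin: "H_psi_finite \<psi>"
    and d_pos: "d > 0"
    and graph: "finite_graph V E"
    and conn: "graph_connected V E"
    and CD: "CDpsi V E \<psi> d"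
    and heat: "heat_solution V E u"
    and u_pos: "\<forall>x\<in>V. \<forall>t\<ge>0. u x t > 0"
    and x1: "x1 \<in> V" and x2: "x2 \<in> V"
    and T: "0 < T1" "T1 < T2"
  shows "ln (u x1 T1 / u x2 T2) \<le> d / 2 * ln (T2 / T1)
           + H_psi \<psi> * (real (gdist E x1 x2))\<^sup>2 / (T2 - T1)"
proof -
  interpret heatset \<psi> d V E u
    using psi_diff psi_concave psi_norm H_fin d_pos graph CD heat u_pos by unfold_locales
  have ex: "\<exists>n. walk E x1 x2 n" using conn x1 x2 unfolding graph_connected_def by blast
  have w: "walk E x1 x2 (gdist E x1 x2)" unfolding gdist_def by (rule LeastI_ex[OF ex])
  have "ln (u x1 T1) - ln (u x2 T2) \<le> d / 2 * (ln T2 - ln T1)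
      + H_psi \<psi> * (real (gdist E x1 x2))\<^sup>2 / (T2 - T1)"
    by (rule path[OF w x1 T])
  moreover have "ln (u x1 T1 / u x2 T2) = ln (u x1 T1) - ln (u x2 T2)"
  proof -
    have "u x1 T1 > 0" "u x2 T2 > 0" using u_pos x1 x2 T by auto
    then show ?thesis by (simp add: ln_div)
  qed
  moreover have "ln (T2 / T1) = ln T2 - ln T1" using T by (simp add: ln_div)
  ultimately show ?thesis by simp
qed

end
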